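(* Let $\mathscr{P}^{S_5}_\bullet$ be the group-action model associated with the Petersen graph, and let $\mathscr{Q}_\bullet$ be the family generated by $\mathscr{P}^{S_5}_2\cup\{\mathrm{GHZ}\}$. Then $\mathscr{Q}_\bullet=\mathscr{P}^{S_5}_\bullet$ if and only if the transposition $R$ belongs to $\mathscr{Q}_4$.
   Context: The Petersen graph $\Gamma$ is the Kneser graph $KG_{5,2}$: vertex set $V_\Gamma$ = the $2$-element subsets of $\{1,\dots,5\}$, adjacency = disjointness. Let $W=\mathbb{C}^{V_\Gamma}$ with basis $(e_v)_{v\in V_\Gamma}$; $S_5$ acts by $\pi\cdot e_{\{a,b\}}=e_{\{\pi(a),\pi(b)\}}$ and diagonally on $W^{\otimes n}$. Set $\mathscr{P}_0=\mathbb{C}$, $\mathscr{P}_n=W^{\otimes n}$, and $\mathscr{P}^{S_5}_n$ = the $S_5$-fixed vectors of $\mathscr{P}_n$. $\mathrm{GHZ}=\sum_{v}e_v\otimes e_v\otimes e_v$, $R=\sum_{u,v}e_u\otimes e_v\otimes e_u\otimes e_v$. Operations: tensor product; contraction $C_{k,k+1}:\mathscr{P}_n\to\mathscr{P}_{n-2}$, $C_{k,k+1}(e_{v_1}\otimes\cdots\otimes e_{v_n})=\delta_{v_k,v_{k+1}}e_{v_1}\otimes\cdots\otimes\widehat{e_{v_k}}\otimes\widehat{e_{v_{k+1}}}\otimes\cdots\otimes e_{v_n}$; rotation $\rho(e_{v_1}\otimes\cdots\otimes e_{v_n})=e_{v_2}\otimes\cdots\otimes e_{v_n}\otimes e_{v_1}$.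 The family generated by a set $X$ of tensors is the smallest family $(\mathscr{Q}_n)_{n\ge0}$ of linear subspaces $\mathscr{Q}_n\subseteq\mathscr{P}_n$ containing $X$, with $1\in\mathscr{Q}_0$, closed under tensor product, all contractions $C_{k,k+1}$, and rotation. *)

theory Defs
  imports Complex_Main "HOL-Combinatorics.Permutations"
begin

text \<open>Vertices of the Petersen graph: 2-element subsets of {1..5}.
  A tensor in W^(tensor n) is encoded by its coefficient function on words
  of vertices: the coefficient of e_v1 (x) ... (x) e_vn is T [v1,...,vn].\<close>

type_synonym vert = "nat set"
type_synonym tensor = "vert list \<Rightarrow> complex"

definition PV :: "vert set" where
  "PV = {A. A \<subseteq> {1..5} \<and> card A = 2}"

definition Pn :: "nat \<Rightarrow> tensor set" where
  "Pn n = {T. \<forall>xs. T xs \<noteq> 0 \<longrightarrow> length xs = n \<and> set xs \<subseteq> PV}"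

text \<open>Action of pi in S5 on tensors: pi . e_{a,b} = e_{pi a, pi b}, diagonally.\<close>
definition act :: "(nat \<Rightarrow> nat) \<Rightarrow> tensor \<Rightarrow> tensor" where
  "act \<pi> T = (\<lambda>xs. T (map (\<lambda>v. inv \<pi> ` v) xs))"

definition PS5 :: "nat \<Rightarrow> tensor set" where
  "PS5 n = {T \<in> Pn n. \<forall>\<pi>. \<pi> permutes {1..5::nat} \<longrightarrow> act \<pi> T = T}"

definition unit_tensor :: tensor where
  "unit_tensor = (\<lambda>xs. if xs = [] then 1 else 0)"

definition tprod :: "nat \<Rightarrow> tensor \<Rightarrow> tensor \<Rightarrow> tensor" where
  "tprod m S T = (\<lambda>xs. if m \<le> length xs then S (take m xs) * T (drop m xs) else 0)"

text \<open>Contraction C_{i+1,i+2} (0-indexed position i) of adjacent slots.\<close>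
definition contract :: "nat \<Rightarrow> tensor \<Rightarrow> tensor" where
  "contract i T = (\<lambda>ys. \<Sum>v\<in>PV. T (take i ys @ v # v # drop i ys))"

text \<open>Rotation rho(e_v1 (x) ... (x) e_vn) = e_v2 (x) ... (x) e_vn (x) e_v1.\<close>
definition rot :: "tensor \<Rightarrow> tensor" where
  "rot T = (\<lambda>xs. if xs = [] then T [] else T (last xs # butlast xs))"

inductive gen :: "(nat \<times> tensor) set \<Rightarrow> nat \<Rightarrow> tensor \<Rightarrow> bool" for X where
  gen_base: "(n, T) \<in> X \<Longrightarrow> gen X n T"
| gen_unit: "gen X 0 unit_tensor"
| gen_zero: "gen X n (\<lambda>_. 0)"
| gen_add: "gen X n S \<Longrightarrow> gen X n T \<Longrightarrow> gen X n (\<lambda>xs. S xs + T xs)"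
| gen_scale: "gen X n T \<Longrightarrow> gen X n (\<lambda>xs. c * T xs)"
| gen_tprod: "gen X m S \<Longrightarrow> gen X k T \<Longrightarrow> gen X (m + k) (tprod m S T)"
| gen_contract: "gen X n T \<Longrightarrow> i + 2 \<le> n \<Longrightarrow> gen X (n - 2) (contract i T)"
| gen_rot: "gen X n T \<Longrightarrow> gen X n (rot T)"

definition GHZ :: tensor where
  "GHZ = (\<lambda>xs. if length xs = 3 \<and> xs ! 0 \<in> PV \<and> xs ! 1 = xs ! 0 \<and> xs ! 2 = xs ! 0
               then 1 else 0)"

definition Rt :: tensor where
  "Rt = (\<lambda>xs. if length xs = 4 \<and> set xs \<subseteq> PV \<and> xs ! 2 = xs ! 0 \<and> xs ! 3 = xs ! 1
               then 1 else 0)"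

definition Qfam :: "nat \<Rightarrow> tensor set" where
  "Qfam n = {T. gen ({(2, T) | T. T \<in> PS5 2} \<union> {(3, GHZ)}) n T}"

end

theory Submission
  imports Defs
begin

lemma PV_fin: "finite PV"
proof -
  have "PV \<subseteq> Pow {1..5}" unfolding PV_def by auto
  thus ?thesis by (rule finite_subset) simp
qed

lemma PV_ne: "A \<in> PV \<Longrightarrow> A \<noteq> {}"
  unfolding PV_def by auto

lemma img_PV:
  assumes "\<sigma> permutes {1..5::nat}" and "v \<in> PV"
  shows "\<sigma> ` v \<in> PV"
proof -
  have "inj \<sigma>" using assms(1) by (rule permutes_inj)
  hence c: "card (\<sigma> ` v) = card v" by (meson card_image inj_on_subset subset_UNIV)
  have "v \<subseteq> {1..5}" using assms(2) unfolding PV_def by auto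
  hence "\<sigma> ` v \<subseteq> \<sigma> ` {1..5}" by auto
  also have "\<dots> = {1..5}" using assms(1) by (rule permutes_image)
  finally show ?thesis using c assms(2) unfolding PV_def by auto
qed

lemma bij_img_PV:
  assumes "\<sigma> permutes {1..5::nat}"
  shows "bij_betw (\<lambda>v. \<sigma> ` v) PV PV"
proof -
  have inj: "inj \<sigma>" using assms by (rule permutes_inj)
  have i2: "inj_on (\<lambda>v. \<sigma> ` v) PV" using inj by (simp add: inj_on_def inj_image_eq_iff)
  have "(\<lambda>v. \<sigma> ` v) ` PV = PV"
  proof
    show "(\<lambda>v. \<sigma> ` v) ` PV \<subseteq> PV" using img_PV[OF assms] by auto
    show "PV \<subseteq> (\<lambda>v. \<sigma> ` v) ` PV"
    proof
      fix u assume u: "u \<in> PV"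
      have "inv \<sigma> permutes {1..5}" using assms by (rule permutes_inv)
      hence "inv \<sigma> ` u \<in> PV" using img_PV u by blast
      moreover have "\<sigma> ` (inv \<sigma> ` u) = u"
        using assms by (simp add: image_comp permutes_inverses(1) comp_def)
      ultimately show "u \<in> (\<lambda>v. \<sigma> ` v) ` PV" by (metis image_eqI)
    qed
  qed
  with i2 show ?thesis by (simp add: bij_betw_def)
qed

lemma gen_Pn:
  assumes X: "\<And>n T. (n, T) \<in> X \<Longrightarrow> T \<in> Pn n"
  shows "gen X n T \<Longrightarrow> T \<in> Pn n"
proof (induction rule: gen.induct)
  case (gen_base n T) thus ?case using X by blast
next
  case gen_unit thus ?case by (auto simp: Pn_def unit_tensor_def)
next
  case (gen_zero n) thus ?case by (auto simp: Pn_def)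
next
  case (gen_add n S T)
  show ?case unfolding Pn_def mem_Collect_eq
  proof (intro allI impI)
    fix xs assume "S xs + T xs \<noteq> 0"
    hence "S xs \<noteq> 0 \<or> T xs \<noteq> 0" by auto
    thus "length xs = n \<and> set xs \<subseteq> PV" using gen_add.IH unfolding Pn_def by blast
  qed
next
  case (gen_scale n T c)
  show ?case unfolding Pn_def mem_Collect_eq
  proof (intro allI impI)
    fix xs assume "c * T xs \<noteq> 0"
    hence "T xs \<noteq> 0" by auto
    thus "length xs = n \<and> set xs \<subseteq> PV" using gen_scale.IH unfolding Pn_def by blast
  qed
next
  case (gen_tprod m S k T)
  show ?case unfolding Pn_def mem_Collect_eq
  proof (intro allI impI)
    fix xs assume nz: "tprod m S T xs \<noteq> 0"
    hence le: "m \<le> length xs" and s: "S (take m xs) \<noteq> 0" and t: "T (drop m xs) \<noteq> 0"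
      by (auto simp: tprod_def split: if_splits)
    from s gen_tprod.IH(1) have 1: "length (take m xs) = m" "set (take m xs) \<subseteq> PV" by (auto simp: Pn_def)
    from t gen_tprod.IH(2) have 2: "length (drop m xs) = k" "set (drop m xs) \<subseteq> PV" by (auto simp: Pn_def)
    have "set xs \<subseteq> PV" using 1 2 by (metis append_take_drop_id set_append Un_subset_iff)
    moreover have "length xs = m + k" using 2 le by simp
    ultimately show "length xs = m + k \<and> set xs \<subseteq> PV" by simp
  qed
next
  case (gen_contract n T i)
  show ?case unfolding Pn_def mem_Collect_eq
  proof (intro allI impI)
    fix ys assume nz: "contract i T ys \<noteq> 0"
    then obtain v where "v \<in> PV" and tv: "T (take i ys @ v # v # drop i ys) \<noteq> 0"
      unfolding contract_def by (meson sum.not_neutral_contains_not_neutral)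
    have ls: "length (take i ys @ v # v # drop i ys) = n \<and> set (take i ys @ v # v # drop i ys) \<subseteq> PV"
      using gen_contract.IH tv unfolding Pn_def by blast
    hence l: "length (take i ys @ v # v # drop i ys) = n"
      and s: "set (take i ys @ v # v # drop i ys) \<subseteq> PV" by auto
    from l have "length ys + 2 = n" by simp
    hence "length ys = n - 2" by simp
    moreover have "set ys \<subseteq> PV" using s
      by (metis Un_subset_iff append_take_drop_id set_append set_subset_Cons subset_trans)
    ultimately show "length ys = n - 2 \<and> set ys \<subseteq> PV" by simp
  qed
next
  case (gen_rot n T)
  show ?case unfolding Pn_def mem_Collect_eq
  proof (intro allI impI)
    fix xs assume nz: "rot T xs \<noteq> 0"
    show "length xs = n \<and> set xs \<subseteq> PV"
    proof (cases "xs = []")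
      case True thus ?thesis using nz gen_rot.IH by (auto simp: rot_def Pn_def)
    next
      case False
      with nz have "T (last xs # butlast xs) \<noteq> 0" by (simp add: rot_def)
      with gen_rot.IH have "length (last xs # butlast xs) = n \<and> set (last xs # butlast xs) \<subseteq> PV"
        unfolding Pn_def by blast
      moreover have "set (last xs # butlast xs) = set xs" using False
        by (metis append_butlast_last_id rotate1.simps(2) set_rotate1)
      ultimately show ?thesis using False by (metis insert_subset list.simps(15) length_Cons length_append_singleton append_butlast_last_id)
    qed
  qed
qed

definition X0 :: "(nat \<times> tensor) set" where
  "X0 = {(2, T) | T. T \<in> PS5 2} \<union> {(3, GHZ)}"

lemma Qfam_gen: "Qfam n = {T. gen X0 n T}"
  unfolding Qfam_def X0_def by simp

lemma GHZ_Pn: "GHZ \<in> Pn 3"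
proof -
  { fix xs :: "vert list" assume "GHZ xs \<noteq> 0"
    hence l: "length xs = 3" and a: "xs!0 \<in> PV" "xs!1 = xs!0" "xs!2 = xs!0"
      by (auto simp: GHZ_def split: if_splits)
    then obtain a b c where "xs = [a,b,c]"
      by (metis (no_types) length_0_conv length_Suc_conv numeral_3_eq_3)
    with a have "length xs = 3 \<and> set xs \<subseteq> PV" by auto }
  thus ?thesis unfolding Pn_def by blast
qed

lemma X0_Pn: "(n, T) \<in> X0 \<Longrightarrow> T \<in> Pn n"
  unfolding X0_def PS5_def using GHZ_Pn by auto

lemma gen0_Pn: "gen X0 n T \<Longrightarrow> T \<in> Pn n"
  using gen_Pn[OF X0_Pn] by blast


lemma act_GHZ:
  assumes "\<pi> permutes {1..5::nat}" shows "act \<pi> GHZ = GHZ"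
proof
  fix xs :: "vert list"
  let ?g = "\<lambda>v. inv \<pi> ` v"
  have ip: "inv \<pi> permutes {1..5}" using assms by (rule permutes_inv)
  have bij: "bij_betw ?g PV PV" by (rule bij_img_PV[OF ip])
  have inj: "inj ?g" using permutes_inj[OF ip] by (simp add: inj_def inj_image_eq_iff)
  have mem: "?g v \<in> PV \<longleftrightarrow> v \<in> PV" for v
  proof
    assume "?g v \<in> PV"
    hence "\<pi> ` ?g v \<in> PV" by (rule img_PV[OF assms])
    moreover have "\<pi> ` ?g v = v" using assms by (simp add: image_comp comp_def permutes_inverses(1))
    ultimately show "v \<in> PV" by simp
  next
    assume "v \<in> PV" thus "?g v \<in> PV" by (rule img_PV[OF ip])
  qed
  show "act \<pi> GHZ xs = GHZ xs"
  proof (cases "length xs = 3")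
    case True
    then obtain a b c where xs: "xs = [a,b,c]"
      by (metis (no_types) length_0_conv length_Suc_conv numeral_3_eq_3)
    have e: "?g x = ?g y \<longleftrightarrow> x = y" for x y using inj by (meson injD)
    show ?thesis unfolding act_def GHZ_def xs using mem e by simp
  next
    case False thus ?thesis unfolding act_def GHZ_def by simp
  qed
qed

lemma act_Rt:
  assumes "\<pi> permutes {1..5::nat}" shows "act \<pi> Rt = Rt"
proof
  fix xs :: "vert list"
  let ?g = "\<lambda>v. inv \<pi> ` v"
  have ip: "inv \<pi> permutes {1..5}" using assms by (rule permutes_inv)
  have bij: "bij_betw ?g PV PV" by (rule bij_img_PV[OF ip])
  have inj: "inj ?g" using permutes_inj[OF ip] by (simp add: inj_def inj_image_eq_iff)
  have mem: "?g v \<in> PV \<longleftrightarrow> v \<in> PV" for v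
  proof
    assume "?g v \<in> PV"
    hence "\<pi> ` ?g v \<in> PV" by (rule img_PV[OF assms])
    moreover have "\<pi> ` ?g v = v" using assms by (simp add: image_comp comp_def permutes_inverses(1))
    ultimately show "v \<in> PV" by simp
  next
    assume "v \<in> PV" thus "?g v \<in> PV" by (rule img_PV[OF ip])
  qed
  have e: "?g x = ?g y \<longleftrightarrow> x = y" for x y using inj by (meson injD)
  show "act \<pi> Rt xs = Rt xs"
  proof (cases "length xs = 4")
    case True
    have "\<exists>a b c d. xs = [a,b,c,d]" using True by (auto simp: numeral_eq_Suc length_Suc_conv)
    then obtain a b c d where xs: "xs = [a,b,c,d]" by blast
    show ?thesis unfolding act_def Rt_def xs using mem e by simp
  next
    case False thus ?thesis unfolding act_def Rt_def by simp
  qed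
qed

lemma Rt_PS5: "Rt \<in> PS5 4"
proof -
  have "Rt \<in> Pn 4"
  proof -
    { fix xs :: "vert list" assume "Rt xs \<noteq> 0"
      hence "length xs = 4 \<and> set xs \<subseteq> PV" by (auto simp: Rt_def split: if_splits) }
    thus ?thesis unfolding Pn_def by blast
  qed
  thus ?thesis unfolding PS5_def using act_Rt by blast
qed

lemma gen_inv:
  assumes X: "\<And>n T. (n, T) \<in> X \<Longrightarrow> act \<pi> T = T"
    and p: "\<pi> permutes {1..5::nat}"
  shows "gen X n T \<Longrightarrow> act \<pi> T = T"
proof (induction rule: gen.induct)
  case (gen_base n T) thus ?case using X by blast
next
  case gen_unit thus ?case by (auto simp: act_def unit_tensor_def)
next
  case (gen_zero n) thus ?case by (auto simp: act_def)
next
  case (gen_add n S T) thus ?case by (simp add: act_def fun_eq_iff)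
next
  case (gen_scale n T c) thus ?case by (simp add: act_def fun_eq_iff)
next
  case (gen_tprod m S k T)
  show ?case
  proof
    fix xs
    show "act \<pi> (tprod m S T) xs = tprod m S T xs"
      using fun_cong[OF gen_tprod.IH(1)] fun_cong[OF gen_tprod.IH(2)]
      unfolding act_def tprod_def by (simp add: take_map drop_map)
  qed
next
  case (gen_contract n T i)
  let ?g = "\<lambda>v. inv \<pi> ` v"
  have ip: "inv \<pi> permutes {1..5}" using p by (rule permutes_inv)
  have bij: "bij_betw ?g PV PV" by (rule bij_img_PV[OF ip])
  have T: "T (map ?g xs) = T xs" for xs using fun_cong[OF gen_contract.IH, of xs] by (simp add: act_def)
  show ?case
  proof
    fix ys
    have "act \<pi> (contract i T) ys = (\<Sum>u\<in>PV. T (map ?g (take i ys) @ u # u # map ?g (drop i ys)))"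
      unfolding act_def contract_def by (simp add: take_map drop_map)
    also have "\<dots> = (\<Sum>v\<in>PV. T (map ?g (take i ys) @ ?g v # ?g v # map ?g (drop i ys)))"
      using sum.reindex_bij_betw[OF bij, of "\<lambda>u. T (map ?g (take i ys) @ u # u # map ?g (drop i ys))"]
      by simp
    also have "\<dots> = (\<Sum>v\<in>PV. T (take i ys @ v # v # drop i ys))"
      using T[of "take i ys @ v # v # drop i ys" for v] by simp
    finally show "act \<pi> (contract i T) ys = contract i T ys" unfolding contract_def .
  qed
next
  case (gen_rot n T)
  show ?case
  proof
    fix xs
    show "act \<pi> (rot T) xs = rot T xs"
      using fun_cong[OF gen_rot.IH, of "last xs # butlast xs"] fun_cong[OF gen_rot.IH, of "[]"]
      unfolding act_def rot_def by (simp add: last_map map_butlast)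
  qed
qed

lemma X0_inv: "\<pi> permutes {1..5::nat} \<Longrightarrow> (n, T) \<in> X0 \<Longrightarrow> act \<pi> T = T"
  unfolding X0_def PS5_def using act_GHZ by auto

lemma Qfam_sub: "Qfam n \<subseteq> PS5 n"
proof
  fix T assume "T \<in> Qfam n"
  hence g: "gen X0 n T" by (simp add: Qfam_gen)
  show "T \<in> PS5 n" unfolding PS5_def
  proof (intro CollectI conjI allI impI)
    show "T \<in> Pn n" using g gen0_Pn by blast
    fix \<pi> :: "nat \<Rightarrow> nat" assume p: "\<pi> permutes {1..5}"
    show "act \<pi> T = T" by (rule gen_inv[OF X0_inv[OF p] p g])
  qed
qed


lemma Pn_zero: "T \<in> Pn n \<Longrightarrow> \<not> (length xs = n \<and> set xs \<subseteq> PV) \<Longrightarrow> T xs = 0"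
  unfolding Pn_def by blast

lemma gen_cong:
  assumes g: "gen X0 n T" and eq: "\<And>xs. length xs = n \<Longrightarrow> set xs \<subseteq> PV \<Longrightarrow> T xs = T' xs"
    and p: "T' \<in> Pn n"
  shows "gen X0 n T'"
proof -
  have tp: "T \<in> Pn n" using g by (rule gen0_Pn)
  have "T = T'"
  proof
    fix xs show "T xs = T' xs"
    proof (cases "length xs = n \<and> set xs \<subseteq> PV")
      case True thus ?thesis using eq by blast
    next
      case False thus ?thesis using Pn_zero[OF tp False] Pn_zero[OF p False] by simp
    qed
  qed
  thus ?thesis using g by simp
qed

lemma Pn_comp:
  assumes "T \<in> Pn n" and "\<And>xs. length (f xs) = length xs"
    and "\<And>xs. length xs = n \<Longrightarrow> set (f xs) = set xs"
  shows "(\<lambda>xs. T (f xs)) \<in> Pn n"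
  unfolding Pn_def mem_Collect_eq
proof (intro allI impI)
  fix xs assume "T (f xs) \<noteq> 0"
  hence 1: "length (f xs) = n \<and> set (f xs) \<subseteq> PV" using assms(1) unfolding Pn_def by blast
  hence "length xs = n" using assms(2) by simp
  thus "length xs = n \<and> set xs \<subseteq> PV" using 1 assms(3) by simp
qed

lemma last_butlast_rotate: "xs \<noteq> [] \<Longrightarrow> last xs # butlast xs = rotate (length xs - 1) xs"
proof -
  assume ne: "xs \<noteq> []"
  have "rotate (length (butlast xs)) (butlast xs @ [last xs]) = [last xs] @ butlast xs"
    by (rule rotate_append)
  thus ?thesis using ne by (simp add: append_butlast_last_id)
qed

lemma rot_pow: "(rot ^^ j) T xs = T (rotate (j * (length xs - 1)) xs)"
proof (induction j arbitrary: xs)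
  case 0 thus ?case by simp
next
  case (Suc j)
  show ?case
  proof (cases "xs = []")
    case True thus ?thesis using Suc by (simp add: rot_def)
  next
    case False
    have "(rot ^^ Suc j) T xs = ((rot ^^ j) T) (last xs # butlast xs)"
      using False by (simp add: rot_def)
    also have "\<dots> = T (rotate (j * (length xs - 1)) (rotate (length xs - 1) xs))"
      using Suc False by (simp add: last_butlast_rotate)
    also have "\<dots> = T (rotate (Suc j * (length xs - 1)) xs)"
      by (simp add: rotate_rotate add.commute)
    finally show ?thesis .
  qed
qed

lemma gen_rot_pow: "gen X n T \<Longrightarrow> gen X n ((rot ^^ j) T)"
  by (induction j) (auto intro: gen_rot)

lemma mod_sq: "n \<ge> 1 \<Longrightarrow> (c * (n - 1) * (n - 1)) mod n = c mod (n::nat)"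
proof (cases "n \<le> 1")
  case True assume "n \<ge> 1" thus ?thesis using True by (cases n) auto
next
  case False
  define k where "k = n - 2"
  have k: "n = Suc (Suc k)" using False unfolding k_def by arith
  hence "c * (n - 1) * (n - 1) = c + n * (c * k)" by (simp add: algebra_simps)
  thus ?thesis by simp
qed

lemma gen_rotate:
  assumes g: "gen X0 n T" shows "gen X0 n (\<lambda>xs. T (rotate c xs))"
proof (rule gen_cong)
  show "gen X0 n ((rot ^^ (c * (n - 1))) T)" using g by (rule gen_rot_pow)
  show "(\<lambda>xs. T (rotate c xs)) \<in> Pn n"
    by (rule Pn_comp[OF gen0_Pn[OF g]]) simp_all
  fix xs :: "vert list" assume l: "length xs = n"
  have "rotate (c * (n - 1) * (n - 1)) xs = rotate c xs"
  proof (cases "n = 0")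
    case True thus ?thesis using l by simp
  next
    case False thus ?thesis using l mod_sq[of n c] by (metis One_nat_def Suc_leI neq0_conv rotate_conv_mod)
  qed
  thus "(rot ^^ (c * (n - 1))) T xs = T (rotate c xs)" using l by (simp add: rot_pow)
qed

definition swp :: "nat \<Rightarrow> nat \<Rightarrow> 'a list \<Rightarrow> 'a list" where
  "swp i j xs = xs[i := xs ! j, j := xs ! i]"

lemma length_swp[simp]: "length (swp i j xs) = length xs"
  by (simp add: swp_def)

lemma set_swp: "i < length xs \<Longrightarrow> j < length xs \<Longrightarrow> set (swp i j xs) = set xs"
  unfolding swp_def by (metis set_swap)

lemma nth_swp: "i < length xs \<Longrightarrow> j < length xs \<Longrightarrow> k < length xs \<Longrightarrow>
  swp i j xs ! k = (if k = j then xs ! i else if k = i then xs ! j else xs ! k)"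
  unfolding swp_def by (simp add: nth_list_update)

lemma split_last2:
  assumes "length xs = Suc (Suc m)"
  obtains y r s where "xs = y @ [r, s]" "length y = m"
proof -
  obtain ys s where 1: "xs = ys @ [s]" "length ys = Suc m" using assms by (metis length_Suc_conv_rev)
  obtain y r where 2: "ys = y @ [r]" "length y = m" using 1(2) by (metis length_Suc_conv_rev)
  show ?thesis using that[of y r s] 1 2 by simp
qed

lemma swp_last2: "length y = k \<Longrightarrow> swp k (Suc k) (y @ [r, s]) = y @ [s, r]"
  unfolding swp_def by (simp add: list_update_append nth_append)

lemma sum2_delta:
  assumes "finite A" "r \<in> A" "s \<in> A"
  shows "(\<Sum>a\<in>A. \<Sum>b\<in>A. f a b * (if a = s \<and> b = r then 1 else 0)) = (f s r :: complex)"
proof -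
  have "(\<Sum>a\<in>A. \<Sum>b\<in>A. f a b * (if a = s \<and> b = r then 1 else 0))
      = (\<Sum>a\<in>A. if a = s then (\<Sum>b\<in>A. f a b * (if b = r then 1 else 0)) else 0)"
    by (rule sum.cong) auto
  also have "\<dots> = (\<Sum>b\<in>A. f s b * (if b = r then 1 else 0))" using assms by simp
  also have "\<dots> = f s r" using assms by (simp add: if_distrib cong: if_cong)
  finally show ?thesis .
qed

lemma gen_swlast:
  assumes R: "gen X0 4 Rt" and g: "gen X0 n T" and n: "2 \<le> n"
  shows "gen X0 n (\<lambda>xs. T (swp (n - 2) (n - 1) xs))"
proof (rule gen_cong)
  let ?U = "tprod n T Rt"
  have U: "gen X0 (n + 4) ?U" using g R by (rule gen_tprod)
  have "gen X0 (n + 4 - 2) (contract (n - 1) ?U)" using U by (rule gen_contract) (use n in simp)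
  hence V: "gen X0 (n + 2) (contract (n - 1) ?U)" by simp
  have "gen X0 (n + 2 - 2) (contract (n - 2) (contract (n - 1) ?U))"
    using V by (rule gen_contract) (use n in simp)
  thus "gen X0 n (contract (n - 2) (contract (n - 1) ?U))" by simp
  show "(\<lambda>xs. T (swp (n - 2) (n - 1) xs)) \<in> Pn n"
    by (rule Pn_comp[OF gen0_Pn[OF g]]) (use n in \<open>simp_all add: set_swp\<close>)
  fix xs :: "vert list" assume l: "length xs = n" and s: "set xs \<subseteq> PV"
  obtain m where m: "n = Suc (Suc m)" using n by (metis add_2_eq_Suc le_Suc_ex)
  obtain y r t where xs: "xs = y @ [r, t]" and ly: "length y = m" using l m split_last2 by metis
  have rt: "r \<in> PV" "t \<in> PV" using s xs by auto
  have "contract (n - 2) (contract (n - 1) ?U) xs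
      = (\<Sum>a\<in>PV. \<Sum>b\<in>PV. ?U (y @ [a, b, b, a, r, t]))"
    unfolding contract_def xs m using ly by simp
  also have "\<dots> = (\<Sum>a\<in>PV. \<Sum>b\<in>PV. T (y @ [a, b]) * (if a = t \<and> b = r then 1 else 0))"
  proof (intro sum.cong refl)
    fix a b assume "a \<in> PV" "b \<in> PV"
    thus "?U (y @ [a, b, b, a, r, t]) = T (y @ [a, b]) * (if a = t \<and> b = r then 1 else 0)"
      unfolding tprod_def Rt_def m using ly rt by auto
  qed
  also have "\<dots> = T (y @ [t, r])" by (rule sum2_delta[OF PV_fin rt])
  also have "\<dots> = T (swp (n - 2) (n - 1) xs)" unfolding xs m using swp_last2[OF ly] by simp
  finally show "contract (n - 2) (contract (n - 1) ?U) xs = T (swp (n - 2) (n - 1) xs)" .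
qed


lemma rot_swp: "Suc (Suc k) < length ys \<Longrightarrow>
  rotate1 (swp (Suc k) (Suc (Suc k)) ys) = swp k (Suc k) (rotate1 ys)"
  by (cases ys) (simp_all add: swp_def list_update_append nth_append)

lemma gen_swap_adj_aux:
  assumes R: "gen X0 4 Rt"
  shows "\<forall>k T. n - 2 - k = d \<longrightarrow> gen X0 n T \<longrightarrow> Suc k < n \<longrightarrow> gen X0 n (\<lambda>xs. T (swp k (Suc k) xs))"
proof (induction d)
  case 0
  show ?case
  proof (intro allI impI)
    fix k T assume d: "n - 2 - k = 0" and g: "gen X0 n T" and k: "Suc k < n"
    have e: "k = n - 2" using d k by arith
    have e2: "Suc (n - 2) = n - 1" using k by arith
    have n2: "2 \<le> n" using k by arith
    show "gen X0 n (\<lambda>xs. T (swp k (Suc k) xs))"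
      unfolding e e2 using gen_swlast[OF R g n2] .
  qed
next
  case (Suc d)
  show ?case
  proof (intro allI impI)
    fix k T assume d: "n - 2 - k = Suc d" and g: "gen X0 n T" and k: "Suc k < n"
    have k2: "Suc (Suc k) < n" using d k by arith
    have d2: "n - 2 - Suc k = d" using d by arith
    have g1: "gen X0 n (\<lambda>xs. T (rotate 1 xs))" using g by (rule gen_rotate)
    have g2: "gen X0 n (\<lambda>xs. T (rotate 1 (swp (Suc k) (Suc (Suc k)) xs)))"
      using Suc.IH d2 g1 k2 by blast
    have g3: "gen X0 n (\<lambda>xs. T (rotate 1 (swp (Suc k) (Suc (Suc k)) (rotate (n - 1) xs))))"
      using gen_rotate[OF g2] by simp
    show "gen X0 n (\<lambda>xs. T (swp k (Suc k) xs))"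
    proof (rule gen_cong[OF g3])
      show "(\<lambda>xs. T (swp k (Suc k) xs)) \<in> Pn n"
        by (rule Pn_comp[OF gen0_Pn[OF g]]) (use k in \<open>simp_all add: set_swp\<close>)
      fix xs :: "vert list" assume l: "length xs = n"
      have r: "rotate1 (rotate (n - 1) xs) = xs"
      proof -
        have "rotate1 (rotate (n - 1) xs) = rotate (Suc (n - 1)) xs" by simp
        also have "Suc (n - 1) = length xs" using l k by simp
        finally show ?thesis by (simp add: rotate_id)
      qed
      have "rotate1 (swp (Suc k) (Suc (Suc k)) (rotate (n - 1) xs)) = swp k (Suc k) xs"
        using rot_swp[of k "rotate (n - 1) xs"] k2 l r by simp
      thus "T (rotate 1 (swp (Suc k) (Suc (Suc k)) (rotate (n - 1) xs))) = T (swp k (Suc k) xs)"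
        by simp
    qed
  qed
qed

lemma gen_swap_adj:
  assumes R: "gen X0 4 Rt" and g: "gen X0 n T" and k: "Suc k < n"
  shows "gen X0 n (\<lambda>xs. T (swp k (Suc k) xs))"
  using gen_swap_adj_aux[OF R, of n "n - 2 - k"] g k by blast

definition ACt :: "nat \<Rightarrow> nat \<Rightarrow> tensor \<Rightarrow> tensor" where
  "ACt n j T = (\<lambda>zs. if length zs = Suc n \<and> set zs \<subseteq> PV \<and> last zs = zs ! j then T (butlast zs) else 0)"

lemma ACt_Pn: "ACt n j T \<in> Pn (Suc n)"
  unfolding ACt_def Pn_def by auto

lemma gen_dup:
  assumes g: "gen X0 n T" and n: "1 \<le> n"
  shows "gen X0 (Suc n) (ACt n (n - 1) T)"
proof (rule gen_cong[OF _ _ ACt_Pn])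
  let ?U = "tprod n T GHZ"
  have G: "gen X0 3 GHZ" by (rule gen_base) (simp add: X0_def)
  have U: "gen X0 (n + 3) ?U" using g G by (rule gen_tprod)
  have "gen X0 (n + 3 - 2) (contract (n - 1) ?U)" using U by (rule gen_contract) (use n in simp)
  thus "gen X0 (Suc n) (contract (n - 1) ?U)" by simp
  fix zs :: "vert list" assume l: "length zs = Suc n" and s: "set zs \<subseteq> PV"
  define m where "m = n - 1"
  have nm: "n = Suc m" using n unfolding m_def by simp
  obtain y b c where zs: "zs = y @ [b, c]" and ly: "length y = m" using l nm split_last2 by metis
  have bc: "b \<in> PV" "c \<in> PV" using s zs by auto
  have "contract (n - 1) ?U zs = (\<Sum>v\<in>PV. ?U (y @ [v, v, b, c]))"
    unfolding contract_def zs nm using ly by simp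
  also have "\<dots> = (\<Sum>v\<in>PV. if v = b then (if c = b then T (y @ [v]) else 0) else 0)"
  proof (intro sum.cong refl)
    fix v assume "v \<in> PV"
    thus "?U (y @ [v, v, b, c]) = (if v = b then (if c = b then T (y @ [v]) else 0) else 0)"
      unfolding tprod_def GHZ_def nm using ly by (auto simp: nth_append)
  qed
  also have "\<dots> = (if c = b then T (y @ [b]) else 0)" using bc PV_fin by simp
  also have "\<dots> = ACt n (n - 1) T zs"
    unfolding ACt_def zs nm using ly s zs by (auto simp: nth_append butlast_append)
  finally show "contract (n - 1) ?U zs = ACt n (n - 1) T zs" .
qed

lemma swp_swp: "i < length xs \<Longrightarrow> j < length xs \<Longrightarrow> swp i j (swp i j xs) = xs"
  by (rule nth_equalityI) (auto simp: nth_swp)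

lemma last_swp: "i < length xs - 1 \<Longrightarrow> j < length xs - 1 \<Longrightarrow> last (swp i j xs) = last xs"
proof -
  assume a: "i < length xs - 1" "j < length xs - 1"
  hence ne: "xs \<noteq> []" by auto
  hence ne2: "swp i j xs \<noteq> []" by (metis length_swp length_0_conv)
  show ?thesis using a ne ne2 by (simp add: last_conv_nth nth_swp)
qed

lemma butlast_swp: "i < length xs - 1 \<Longrightarrow> j < length xs - 1 \<Longrightarrow>
  butlast (swp i j xs) = swp i j (butlast xs)"
  by (rule nth_equalityI) (auto simp: nth_swp nth_butlast)

lemma gen_AC_aux:
  assumes R: "gen X0 4 Rt"
  shows "\<forall>j T. n - 1 - j = d \<longrightarrow> gen X0 n T \<longrightarrow> j < n \<longrightarrow> gen X0 (Suc n) (ACt n j T)"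
proof (induction d)
  case 0
  show ?case
  proof (intro allI impI)
    fix j T assume d: "n - 1 - j = 0" and g: "gen X0 n T" and j: "j < n"
    have e: "j = n - 1" using d j by arith
    show "gen X0 (Suc n) (ACt n j T)" unfolding e by (rule gen_dup[OF g]) (use j in simp)
  qed
next
  case (Suc d)
  show ?case
  proof (intro allI impI)
    fix j T assume d: "n - 1 - j = Suc d" and g: "gen X0 n T" and j: "j < n"
    have j2: "Suc j < n" using d j by arith
    have d2: "n - 1 - Suc j = d" using d by arith
    let ?T' = "\<lambda>xs. T (swp j (Suc j) xs)"
    have g1: "gen X0 n ?T'" by (rule gen_swap_adj[OF R g j2])
    have g2: "gen X0 (Suc n) (ACt n (Suc j) ?T')" using Suc.IH d2 g1 j2 by blast
    have g3: "gen X0 (Suc n) (\<lambda>zs. ACt n (Suc j) ?T' (swp j (Suc j) zs))"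
      by (rule gen_swap_adj[OF R g2]) (use j2 in simp)
    have eq: "(\<lambda>zs. ACt n (Suc j) ?T' (swp j (Suc j) zs)) = ACt n j T"
    proof
      fix zs :: "vert list"
      show "ACt n (Suc j) ?T' (swp j (Suc j) zs) = ACt n j T zs"
      proof (cases "length zs = Suc n")
        case True
        have i1: "j < length zs - 1" "Suc j < length zs - 1" using True j2 by auto
        have st: "set (swp j (Suc j) zs) = set zs" using True j2 by (simp add: set_swp)
        have la: "last (swp j (Suc j) zs) = last zs" using last_swp[OF i1] .
        have nt: "swp j (Suc j) zs ! Suc j = zs ! j" using True j2 by (simp add: nth_swp)
        have bl: "butlast (swp j (Suc j) zs) = swp j (Suc j) (butlast zs)" using butlast_swp[OF i1] .
        have ss: "swp j (Suc j) (swp j (Suc j) (butlast zs)) = butlast zs"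
          using True j2 by (simp add: swp_swp)
        show ?thesis unfolding ACt_def using True st la nt bl ss by simp
      next
        case False thus ?thesis unfolding ACt_def by simp
      qed
    qed
    show "gen X0 (Suc n) (ACt n j T)" using g3 unfolding eq .
  qed
qed

lemma gen_AC:
  assumes R: "gen X0 4 Rt" and g: "gen X0 n T" and j: "j < n"
  shows "gen X0 (Suc n) (ACt n j T)"
  using gen_AC_aux[OF R, of n "n - 1 - j"] g j by blast


definition onesT :: "nat \<Rightarrow> tensor" where
  "onesT n = (\<lambda>xs. if length xs = n \<and> set xs \<subseteq> PV then 1 else 0)"

lemma gen_ones1: "gen X0 1 (onesT 1)"
proof -
  have G: "gen X0 3 GHZ" by (rule gen_base) (simp add: X0_def)
  have "gen X0 (3 - 2) (contract 0 GHZ)" using G by (rule gen_contract) simp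
  moreover have "contract 0 GHZ = onesT 1"
  proof
    fix ys :: "vert list"
    show "contract 0 GHZ ys = onesT 1 ys"
    proof (cases "length ys = 1")
      case True
      then obtain a where ys: "ys = [a]" by (metis One_nat_def length_0_conv length_Suc_conv)
      have "contract 0 GHZ ys = (\<Sum>v\<in>PV. if v = a then 1 else 0)"
        unfolding contract_def GHZ_def ys by (intro sum.cong refl) auto
      thus ?thesis using PV_fin unfolding onesT_def ys by simp
    next
      case False thus ?thesis unfolding contract_def GHZ_def onesT_def by simp
    qed
  qed
  ultimately show ?thesis by simp
qed

lemma gen_onesT: "gen X0 n (onesT n)"
proof (induction n)
  case 0
  have "onesT 0 = unit_tensor" unfolding onesT_def unit_tensor_def by auto
  thus ?case using gen_unit by simp
next
  case (Suc n)
  have "gen X0 (1 + n) (tprod 1 (onesT 1) (onesT n))" using gen_ones1 Suc by (rule gen_tprod)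
  moreover have "tprod 1 (onesT 1) (onesT n) = onesT (Suc n)"
  proof
    fix xs :: "vert list"
    show "tprod 1 (onesT 1) (onesT n) xs = onesT (Suc n) xs"
      by (cases xs) (auto simp: tprod_def onesT_def)
  qed
  ultimately show ?case by simp
qed

lemma gen_sum1:
  assumes g: "gen X0 (Suc n) T"
  shows "gen X0 n (\<lambda>y. \<Sum>v\<in>PV. T (v # y))"
proof -
  have "gen X0 (1 + Suc n) (tprod 1 (onesT 1) T)" using gen_ones1 g by (rule gen_tprod)
  hence "gen X0 (1 + Suc n - 2) (contract 0 (tprod 1 (onesT 1) T))" by (rule gen_contract) simp
  moreover have "contract 0 (tprod 1 (onesT 1) T) = (\<lambda>y. \<Sum>v\<in>PV. T (v # y))"
  proof
    fix ys :: "vert list"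
    show "contract 0 (tprod 1 (onesT 1) T) ys = (\<Sum>v\<in>PV. T (v # ys))"
      unfolding contract_def by (intro sum.cong refl) (simp add: tprod_def onesT_def)
  qed
  ultimately show ?thesis by simp
qed

definition W :: "nat \<Rightarrow> vert list set" where
  "W m = {xs. length xs = m \<and> set xs \<subseteq> PV}"

lemma W_fin: "finite (W m)"
proof -
  have "W m = {xs. set xs \<subseteq> PV \<and> length xs = m}" unfolding W_def by auto
  thus ?thesis using finite_lists_length_eq[OF PV_fin] by simp
qed

lemma W_Suc: "W (Suc m) = (\<lambda>(v, z). v # z) ` (PV \<times> W m)"
proof
  show "W (Suc m) \<subseteq> (\<lambda>(v, z). v # z) ` (PV \<times> W m)"
  proof
    fix xs assume "xs \<in> W (Suc m)"
    then obtain v z where "xs = v # z" "length z = m" "v \<in> PV" "set z \<subseteq> PV"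
      unfolding W_def by (auto simp: length_Suc_conv)
    thus "xs \<in> (\<lambda>(v, z). v # z) ` (PV \<times> W m)" unfolding W_def by force
  qed
  show "(\<lambda>(v, z). v # z) ` (PV \<times> W m) \<subseteq> W (Suc m)" unfolding W_def by auto
qed

lemma W_0: "W 0 = {[]}" unfolding W_def by auto

lemma sum_W_Suc: "(\<Sum>z\<in>W (Suc m). f z) = (\<Sum>z\<in>W m. \<Sum>v\<in>PV. f (v # z))"
proof -
  have inj: "inj_on (\<lambda>(v, z). v # z) (PV \<times> W m)" by (auto simp: inj_on_def)
  have "(\<Sum>z\<in>W (Suc m). f z) = (\<Sum>p\<in>PV \<times> W m. f ((\<lambda>(v, z). v # z) p))"
    unfolding W_Suc by (rule sum.reindex[OF inj, unfolded comp_def])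
  also have "\<dots> = (\<Sum>v\<in>PV. \<Sum>z\<in>W m. f (v # z))"
    by (simp add: sum.cartesian_product split_def)
  also have "\<dots> = (\<Sum>z\<in>W m. \<Sum>v\<in>PV. f (v # z))" by (rule sum.swap)
  finally show ?thesis .
qed

lemma gen_sumW: "gen X0 (m + n) T \<Longrightarrow> gen X0 n (\<lambda>y. \<Sum>z\<in>W m. T (z @ y))"
proof (induction m arbitrary: T)
  case 0 thus ?case by (simp add: W_0)
next
  case (Suc m)
  have "gen X0 (m + n) (\<lambda>y. \<Sum>v\<in>PV. T (v # y))" using Suc.prems by (intro gen_sum1) simp
  hence "gen X0 n (\<lambda>y. \<Sum>z\<in>W m. (\<lambda>y. \<Sum>v\<in>PV. T (v # y)) (z @ y))" by (rule Suc.IH)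
  hence "gen X0 n (\<lambda>y. \<Sum>z\<in>W m. \<Sum>v\<in>PV. T (v # z @ y))" by simp
  thus ?case by (simp add: sum_W_Suc)
qed

lemma gen_CM:
  assumes gS: "gen X0 (n + 2) S" and gM: "gen X0 2 M"
  shows "gen X0 n (\<lambda>y. \<Sum>a\<in>PV. \<Sum>b\<in>PV. S (y @ [a, b]) * M [b, a])"
proof (rule gen_cong)
  let ?U = "tprod (n + 2) S M"
  have U: "gen X0 (n + 2 + 2) ?U" using gS gM by (rule gen_tprod)
  have "gen X0 (n + 2 + 2 - 2) (contract (n + 1) ?U)" using U by (rule gen_contract) simp
  hence V: "gen X0 (n + 2) (contract (n + 1) ?U)" by simp
  have "gen X0 (n + 2 - 2) (contract n (contract (n + 1) ?U))" using V by (rule gen_contract) simp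
  thus "gen X0 n (contract n (contract (n + 1) ?U))" by simp
  have SP: "S \<in> Pn (n + 2)" using gS by (rule gen0_Pn)
  show "(\<lambda>y. \<Sum>a\<in>PV. \<Sum>b\<in>PV. S (y @ [a, b]) * M [b, a]) \<in> Pn n"
    unfolding Pn_def mem_Collect_eq
  proof (intro allI impI)
    fix y assume "(\<Sum>a\<in>PV. \<Sum>b\<in>PV. S (y @ [a, b]) * M [b, a]) \<noteq> 0"
    then obtain a where "(\<Sum>b\<in>PV. S (y @ [a, b]) * M [b, a]) \<noteq> 0"
      by (meson sum.not_neutral_contains_not_neutral)
    then obtain b where "S (y @ [a, b]) * M [b, a] \<noteq> 0"
      by (meson sum.not_neutral_contains_not_neutral)
    hence "S (y @ [a, b]) \<noteq> 0" by auto
    hence "length (y @ [a, b]) = n + 2 \<and> set (y @ [a, b]) \<subseteq> PV" using SP unfolding Pn_def by blast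
    thus "length y = n \<and> set y \<subseteq> PV" by simp
  qed
  fix y :: "vert list" assume l: "length y = n"
  show "contract n (contract (n + 1) ?U) y = (\<Sum>a\<in>PV. \<Sum>b\<in>PV. S (y @ [a, b]) * M [b, a])"
    unfolding contract_def tprod_def using l by simp
qed

lemma gen_mul:
  assumes R: "gen X0 4 Rt" and g: "gen X0 n T" and p: "p < n" and q: "q < n" and gM: "gen X0 2 M"
  shows "gen X0 n (\<lambda>y. T y * M [y ! q, y ! p])"
proof (rule gen_cong)
  let ?S1 = "ACt n p T"
  let ?S2 = "ACt (Suc n) q ?S1"
  have S1: "gen X0 (Suc n) ?S1" by (rule gen_AC[OF R g p])
  have S2: "gen X0 (Suc (Suc n)) ?S2" by (rule gen_AC[OF R S1]) (use q in simp)
  show "gen X0 n (\<lambda>y. \<Sum>a\<in>PV. \<Sum>b\<in>PV. ?S2 (y @ [a, b]) * M [b, a])"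
    by (rule gen_CM[OF _ gM]) (use S2 in simp)
  show "(\<lambda>y. T y * M [y ! q, y ! p]) \<in> Pn n"
    using gen0_Pn[OF g] unfolding Pn_def by auto
  fix y :: "vert list" assume l: "length y = n" and s: "set y \<subseteq> PV"
  have pq: "y ! p \<in> PV" "y ! q \<in> PV" using l s p q by auto
  have "(\<Sum>a\<in>PV. \<Sum>b\<in>PV. ?S2 (y @ [a, b]) * M [b, a])
      = (\<Sum>a\<in>PV. \<Sum>b\<in>PV. (T y * M [b, a]) * (if a = y ! p \<and> b = y ! q then 1 else 0))"
  proof (intro sum.cong refl)
    fix a b assume ab: "a \<in> PV" "b \<in> PV"
    have "?S2 (y @ [a, b]) = (if a = y ! p \<and> b = y ! q then T y else 0)"
      unfolding ACt_def using l s ab p q by (auto simp: nth_append butlast_append)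
    thus "?S2 (y @ [a, b]) * M [b, a] = (T y * M [b, a]) * (if a = y ! p \<and> b = y ! q then 1 else 0)"
      by simp
  qed
  also have "\<dots> = T y * M [y ! q, y ! p]"
    by (rule sum2_delta[OF PV_fin pq(2) pq(1), where f = "\<lambda>a b. T y * M [b, a]"])
  finally show "(\<Sum>a\<in>PV. \<Sum>b\<in>PV. ?S2 (y @ [a, b]) * M [b, a]) = T y * M [y ! q, y ! p]" .
qed


lemma in15: "(x::nat) \<in> {1..5} \<longleftrightarrow> x = 1 \<or> x = 2 \<or> x = 3 \<or> x = 4 \<or> x = 5"
  by auto

lemma PV_two: "C \<in> PV \<Longrightarrow> a \<in> C \<Longrightarrow> b \<in> C \<Longrightarrow> a \<noteq> b \<Longrightarrow> C = {a, b}"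
proof -
  assume C: "C \<in> PV" and ab: "a \<in> C" "b \<in> C" "a \<noteq> b"
  have fC: "finite C" using C PV_ne unfolding PV_def by (auto intro: card_ge_0_finite)
  have "card {a, b} = card C" using C ab unfolding PV_def by simp
  moreover have "{a, b} \<subseteq> C" using ab by simp
  ultimately show ?thesis using card_subset_eq[OF fC] by metis
qed

lemma PV_pair: "A \<in> PV \<Longrightarrow> i \<in> A \<Longrightarrow> \<exists>a. A = {i, a} \<and> a \<noteq> i"
proof -
  assume A: "A \<in> PV" and i: "i \<in> A"
  then obtain x y where "A = {x, y}" "x \<noteq> y" unfolding PV_def by (auto simp: card_2_iff)
  thus ?thesis using i by auto
qed

lemma PV_mk: "x \<in> {1..5} \<Longrightarrow> y \<in> {1..5} \<Longrightarrow> x \<noteq> y \<Longrightarrow> {x, y} \<in> PV"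
  unfolding PV_def by auto

lemma PV_sub: "A \<in> PV \<Longrightarrow> A \<subseteq> {1..5}"
  unfolding PV_def by auto

lemma clique_aux:
  assumes A: "A = {i, a}" and B: "B = {i, b}" and ab: "a \<noteq> b" "a \<noteq> i" "b \<noteq> i"
    and C: "C \<in> PV" and D: "D \<in> PV"
    and dist: "C \<noteq> A" "C \<noteq> B" "D \<noteq> A" "D \<noteq> B" "C \<noteq> D"
    and int: "C \<inter> A \<noteq> {}" "C \<inter> B \<noteq> {}" "D \<inter> A \<noteq> {}" "D \<inter> B \<noteq> {}" "C \<inter> D \<noteq> {}"
  shows "i \<in> C"
proof (rule ccontr)
  assume iC: "i \<notin> C"
  have "a \<in> C" "b \<in> C" using int(1,2) iC A B by auto
  hence Cab: "C = {a, b}" using PV_two[OF C] ab by blast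
  show False
  proof (cases "i \<in> D")
    case False
    have "a \<in> D" "b \<in> D" using int(3,4) False A B by auto
    hence "D = {a, b}" using PV_two[OF D] ab by blast
    thus False using Cab dist(5) by simp
  next
    case True
    then obtain d where Dd: "D = {i, d}" "d \<noteq> i" using PV_pair[OF D] by blast
    have "d \<in> C" using int(5) Dd iC by auto
    hence "d = a \<or> d = b" using Cab by auto
    thus False using Dd A B dist(3,4) by auto
  qed
qed

lemma clique4:
  assumes P: "A \<in> PV" "B \<in> PV" "C \<in> PV" "D \<in> PV"
    and dist: "A \<noteq> B" "A \<noteq> C" "A \<noteq> D" "B \<noteq> C" "B \<noteq> D" "C \<noteq> D"
    and int: "A \<inter> B \<noteq> {}" "A \<inter> C \<noteq> {}" "A \<inter> D \<noteq> {}" "B \<inter> C \<noteq> {}" "B \<inter> D \<noteq> {}" "C \<inter> D \<noteq> {}"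
  shows "\<exists>j. j \<in> A \<and> j \<in> B \<and> j \<in> C \<and> j \<in> D"
proof -
  obtain i where iAB: "i \<in> A" "i \<in> B" using int(1) by auto
  obtain a where Aa: "A = {i, a}" "a \<noteq> i" using PV_pair[OF P(1) iAB(1)] by blast
  obtain b where Bb: "B = {i, b}" "b \<noteq> i" using PV_pair[OF P(2) iAB(2)] by blast
  have ab: "a \<noteq> b" using Aa Bb dist(1) by auto
  have "i \<in> C"
    by (rule clique_aux[OF Aa(1) Bb(1) ab Aa(2) Bb(2) P(3) P(4)])
       (use dist int in \<open>auto simp: Int_commute\<close>)
  moreover have "i \<in> D"
    by (rule clique_aux[OF Aa(1) Bb(1) ab Aa(2) Bb(2) P(4) P(3)])
       (use dist int in \<open>auto simp: Int_commute\<close>)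
  ultimately show ?thesis using iAB by blast
qed

lemma four_others:
  assumes "i \<in> {1..5::nat}"
  shows "\<exists>a b c d. distinct [i, a, b, c, d] \<and> {a, b, c, d} = {1..5} - {i}"
proof -
  have c4: "card ({1..5::nat} - {i}) = 4" using assms by simp
  then obtain a where a: "a \<in> {1..5::nat} - {i}" by (metis card.empty ex_in_conv zero_neq_numeral)
  have "card ({1..5::nat} - {i} - {a}) = 3" using c4 a by simp
  then obtain b c d where bcd: "{1..5::nat} - {i} - {a} = {b, c, d}" "b \<noteq> c" "b \<noteq> d" "c \<noteq> d"
    by (auto simp: card_3_iff)
  have "{a, b, c, d} = insert a ({1..5::nat} - {i} - {a})" using bcd(1) by simp
  also have "\<dots> = {1..5} - {i}" using a by blast
  finally have e: "{a, b, c, d} = {1..5} - {i}" .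
  have "distinct [i, a, b, c, d]" using bcd e a by (simp; blast)
  thus ?thesis using e by blast
qed

lemma two_others:
  assumes "i \<in> {1..5::nat}" "k \<in> {1..5::nat}" "i \<noteq> k"
  shows "\<exists>l m. l \<in> {1..5} \<and> m \<in> {1..5} \<and> distinct [i, k, l, m]"
proof -
  have "card ({1..5::nat} - {i, k}) = 3" using assms by (simp add: card_Diff_subset)
  then obtain x y z where xyz: "{1..5::nat} - {i, k} = {x, y, z}" "x \<noteq> y" "x \<noteq> z" "y \<noteq> z"
    by (auto simp: card_3_iff)
  have "x \<in> {1..5}" "y \<in> {1..5}" "x \<noteq> i" "x \<noteq> k" "y \<noteq> i" "y \<noteq> k" using xyz(1) by blast+
  thus ?thesis using xyz assms(3) by auto
qed


lemma aut:
  assumes im: "\<And>A. A \<in> PV \<Longrightarrow> \<phi> A \<in> PV" and inj: "inj_on \<phi> PV"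
    and dj: "\<And>A B. A \<in> PV \<Longrightarrow> B \<in> PV \<Longrightarrow> (A \<inter> B = {}) \<longleftrightarrow> (\<phi> A \<inter> \<phi> B = {})"
  shows "\<exists>\<pi>. \<pi> permutes {1..5::nat} \<and> (\<forall>A\<in>PV. \<phi> A = \<pi> ` A)"
proof -
  have neqI: "\<phi> X \<noteq> \<phi> Y" if "X \<in> PV" "Y \<in> PV" "X \<noteq> Y" for X Y
    using inj that by (meson inj_onD)
  have intI: "\<phi> X \<inter> \<phi> Y \<noteq> {}" if "X \<in> PV" "Y \<in> PV" "X \<inter> Y \<noteq> {}" for X Y
    using dj that by blast
  have exj: "\<exists>j. \<forall>k\<in>{1..5}. k \<noteq> i \<longrightarrow> j \<in> \<phi> {i, k}" if i: "i \<in> {1..5}" for i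
  proof -
    obtain a b c d where dis: "distinct [i, a, b, c, d]" and e: "{a, b, c, d} = {1..5} - {i}"
      using four_others[OF i] by blast
    have abcd: "a \<in> {1..5}" "b \<in> {1..5}" "c \<in> {1..5}" "d \<in> {1..5}" using e by blast+
    have P: "{i, a} \<in> PV" "{i, b} \<in> PV" "{i, c} \<in> PV" "{i, d} \<in> PV"
      using PV_mk i abcd dis by auto
    have dd: "{i, a} \<noteq> {i, b}" "{i, a} \<noteq> {i, c}" "{i, a} \<noteq> {i, d}"
      "{i, b} \<noteq> {i, c}" "{i, b} \<noteq> {i, d}" "{i, c} \<noteq> {i, d}"
      using dis by (auto simp: doubleton_eq_iff)
    have ii: "{i, a} \<inter> {i, b} \<noteq> {}" "{i, a} \<inter> {i, c} \<noteq> {}" "{i, a} \<inter> {i, d} \<noteq> {}"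
      "{i, b} \<inter> {i, c} \<noteq> {}" "{i, b} \<inter> {i, d} \<noteq> {}" "{i, c} \<inter> {i, d} \<noteq> {}" by auto
    obtain j where j: "j \<in> \<phi> {i, a}" "j \<in> \<phi> {i, b}" "j \<in> \<phi> {i, c}" "j \<in> \<phi> {i, d}"
      using clique4[OF im[OF P(1)] im[OF P(2)] im[OF P(3)] im[OF P(4)]
          neqI[OF P(1) P(2) dd(1)] neqI[OF P(1) P(3) dd(2)] neqI[OF P(1) P(4) dd(3)]
          neqI[OF P(2) P(3) dd(4)] neqI[OF P(2) P(4) dd(5)] neqI[OF P(3) P(4) dd(6)]
          intI[OF P(1) P(2) ii(1)] intI[OF P(1) P(3) ii(2)] intI[OF P(1) P(4) ii(3)]
          intI[OF P(2) P(3) ii(4)] intI[OF P(2) P(4) ii(5)] intI[OF P(3) P(4) ii(6)]]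
      by blast
    have "\<forall>k\<in>{1..5}. k \<noteq> i \<longrightarrow> j \<in> \<phi> {i, k}"
    proof (intro ballI impI)
      fix k assume "k \<in> {1..5::nat}" "k \<noteq> i"
      hence "k \<in> {a, b, c, d}" using e by blast
      thus "j \<in> \<phi> {i, k}" using j by auto
    qed
    thus ?thesis by blast
  qed
  define \<pi> where "\<pi> = (\<lambda>x. if x \<in> {1..5::nat} then (SOME j. \<forall>k\<in>{1..5}. k \<noteq> x \<longrightarrow> j \<in> \<phi> {x, k}) else x)"
  have P1: "\<pi> i \<in> \<phi> {i, k}" if "i \<in> {1..5}" "k \<in> {1..5}" "k \<noteq> i" for i k
  proof -
    have "\<forall>k\<in>{1..5}. k \<noteq> i \<longrightarrow> \<pi> i \<in> \<phi> {i, k}"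
      using someI_ex[OF exj[OF that(1)]] that(1) unfolding \<pi>_def by simp
    thus ?thesis using that by blast
  qed
  have P2: "\<pi> i \<in> {1..5}" if i: "i \<in> {1..5}" for i
  proof -
    define k where "k = (if i = 1 then 2 else (1::nat))"
    have k: "k \<in> {1..5}" "k \<noteq> i" unfolding k_def by auto
    have "{i, k} \<in> PV" using PV_mk i k by auto
    hence "\<phi> {i, k} \<subseteq> {1..5}" using im PV_sub by blast
    thus ?thesis using P1[OF i k] by blast
  qed
  have P3: "inj_on \<pi> {1..5}"
  proof (rule inj_onI, rule ccontr)
    fix i k assume i: "i \<in> {1..5::nat}" and k: "k \<in> {1..5::nat}" and e: "\<pi> i = \<pi> k" and ne: "i \<noteq> k"
    obtain l m where lm: "l \<in> {1..5}" "m \<in> {1..5}" "distinct [i, k, l, m]" using two_others[OF i k ne] by blast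
    have P: "{i, l} \<in> PV" "{k, m} \<in> PV" using PV_mk i k lm by auto
    have "{i, l} \<inter> {k, m} = {}" using lm ne by auto
    hence E: "\<phi> {i, l} \<inter> \<phi> {k, m} = {}" using dj[OF P] by blast
    have 1: "\<pi> i \<in> \<phi> {i, l}" using P1[OF i lm(1)] lm(3) by auto
    have 2: "\<pi> i \<in> \<phi> {k, m}" using P1[OF k lm(2)] lm(3) e by auto
    have "\<pi> i \<in> \<phi> {i, l} \<inter> \<phi> {k, m}" using 1 2 by (rule IntI)
    thus False unfolding E by simp
  qed
  have P4: "\<forall>A\<in>PV. \<phi> A = \<pi> ` A"
  proof
    fix A assume A: "A \<in> PV"
    then obtain i k where ik: "A = {i, k}" "i \<noteq> k" unfolding PV_def by (auto simp: card_2_iff)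
    have "A \<subseteq> {1..5}" using A by (rule PV_sub)
    hence ik5: "i \<in> {1..5}" "k \<in> {1..5}" using ik(1) by auto
    have 1: "\<pi> i \<in> \<phi> A" using P1[OF ik5 ik(2)[symmetric]] ik(1) by simp
    have 2: "\<pi> k \<in> \<phi> A" using P1[OF ik5(2) ik5(1) ik(2)] ik(1) by (simp add: insert_commute)
    have 3: "\<pi> i \<noteq> \<pi> k" using P3 ik5 ik(2) by (meson inj_onD)
    have "\<phi> A = {\<pi> i, \<pi> k}" by (rule PV_two[OF im[OF A] 1 2 3])
    thus "\<phi> A = \<pi> ` A" using ik(1) by simp
  qed
  have P5: "\<pi> permutes {1..5}"
  proof (rule bij_imp_permutes)
    have sub: "\<pi> ` {1..5} \<subseteq> {1..5}" using P2 by blast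
    have "\<pi> ` {1..5} = {1..5}" by (rule endo_inj_surj[OF _ sub P3]) simp
    thus "bij_betw \<pi> {1..5} {1..5}" using P3 by (simp add: bij_betw_def)
    fix x :: nat assume x: "x \<notin> {1..5}" show "\<pi> x = x" unfolding \<pi>_def using x by (simp only: if_False)
  qed
  show ?thesis using P4 P5 by blast
qed


lemma img_PV_iff:
  assumes "\<pi> permutes {1..5::nat}" shows "inv \<pi> ` v \<in> PV \<longleftrightarrow> v \<in> PV"
proof
  have ip: "inv \<pi> permutes {1..5}" using assms by (rule permutes_inv)
  assume "inv \<pi> ` v \<in> PV"
  hence "\<pi> ` (inv \<pi> ` v) \<in> PV" by (rule img_PV[OF assms])
  moreover have "\<pi> ` (inv \<pi> ` v) = v" using assms by (simp add: image_comp comp_def permutes_inverses(1))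
  ultimately show "v \<in> PV" by simp
next
  have ip: "inv \<pi> permutes {1..5}" using assms by (rule permutes_inv)
  assume "v \<in> PV" thus "inv \<pi> ` v \<in> PV" by (rule img_PV[OF ip])
qed

definition Adj :: tensor where
  "Adj = (\<lambda>xs. if length xs = 2 \<and> set xs \<subseteq> PV \<and> xs ! 0 \<inter> xs ! 1 = {} then 1 else 0)"

definition Nadj :: tensor where
  "Nadj = (\<lambda>xs. if length xs = 2 \<and> set xs \<subseteq> PV \<and> xs ! 0 \<noteq> xs ! 1 \<and> xs ! 0 \<inter> xs ! 1 \<noteq> {} then 1 else 0)"

lemma len2: "length xs = 2 \<Longrightarrow> \<exists>a b. xs = [a, b]"
  by (auto simp: numeral_eq_Suc length_Suc_conv)

lemma Adj_PS5: "Adj \<in> PS5 2" and Nadj_PS5: "Nadj \<in> PS5 2"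
proof -
  have P: "Adj \<in> Pn 2" "Nadj \<in> Pn 2" unfolding Pn_def Adj_def Nadj_def by auto
  have I: "act \<pi> Adj = Adj \<and> act \<pi> Nadj = Nadj" if p: "\<pi> permutes {1..5::nat}" for \<pi>
  proof -
    have inj: "inj (inv \<pi>)" using permutes_inj[OF permutes_inv[OF p]] .
    have e: "inv \<pi> ` x = inv \<pi> ` y \<longleftrightarrow> x = y" for x y using inj by (simp add: inj_image_eq_iff)
    have i: "inv \<pi> ` x \<inter> inv \<pi> ` y = {} \<longleftrightarrow> x \<inter> y = {}" for x y
      using inj by (simp add: image_Int[symmetric])
    have m: "inv \<pi> ` v \<in> PV \<longleftrightarrow> v \<in> PV" for v using img_PV_iff[OF p] .
    have "act \<pi> Adj xs = Adj xs \<and> act \<pi> Nadj xs = Nadj xs" for xs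
    proof (cases "length xs = 2")
      case True
      then obtain a b where xs: "xs = [a, b]" using len2 by blast
      show ?thesis unfolding act_def Adj_def Nadj_def xs using e i m by simp
    next
      case False thus ?thesis unfolding act_def Adj_def Nadj_def by simp
    qed
    thus ?thesis by auto
  qed
  show "Adj \<in> PS5 2" unfolding PS5_def using P I by blast
  show "Nadj \<in> PS5 2" unfolding PS5_def using P I by blast
qed

definition wl :: "vert list" where "wl = (SOME w. distinct w \<and> set w = PV)"

lemma wl: "distinct wl" "set wl = PV"
proof -
  have "\<exists>w. distinct w \<and> set w = PV" using finite_distinct_list[OF PV_fin] by metis
  hence "distinct wl \<and> set wl = PV" unfolding wl_def by (rule someI_ex)
  thus "distinct wl" "set wl = PV" by auto
qed

definition idx :: "vert \<Rightarrow> nat" where "idx v = (THE p. p < length wl \<and> wl ! p = v)"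

lemma idx: "v \<in> PV \<Longrightarrow> idx v < length wl \<and> wl ! idx v = v"
proof -
  assume "v \<in> PV"
  hence "\<exists>!p. p < length wl \<and> wl ! p = v" using distinct_Ex1 wl by metis
  thus ?thesis unfolding idx_def by (rule theI')
qed

lemma idx_nth: "p < length wl \<Longrightarrow> idx (wl ! p) = p"
proof -
  assume p: "p < length wl"
  have "wl ! p \<in> PV" using p wl(2) nth_mem by blast
  hence "idx (wl ! p) < length wl" "wl ! idx (wl ! p) = wl ! p" using idx by auto
  thus ?thesis using p wl(1) nth_eq_iff_index_eq by blast
qed

definition relok :: "nat \<Rightarrow> nat \<Rightarrow> vert list \<Rightarrow> bool" where
  "relok p q z \<longleftrightarrow> z ! p \<noteq> z ! q \<and> ((z ! p \<inter> z ! q = {}) \<longleftrightarrow> (wl ! p \<inter> wl ! q = {}))"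

definition good :: "vert list \<Rightarrow> bool" where
  "good z \<longleftrightarrow> (\<forall>p q. p < q \<longrightarrow> q < length wl \<longrightarrow> relok p q z)"

definition Mf :: "nat \<Rightarrow> nat \<Rightarrow> tensor" where
  "Mf p q = (if wl ! p \<inter> wl ! q = {} then Adj else Nadj)"

lemma gen_Mf: "gen X0 2 (Mf p q)"
  unfolding Mf_def using Adj_PS5 Nadj_PS5 by (auto intro!: gen_base simp: X0_def)

definition EP :: "(nat \<times> nat) list \<Rightarrow> tensor" where
  "EP P = (\<lambda>z. if length z = length wl \<and> set z \<subseteq> PV \<and> (\<forall>(p, q)\<in>set P. relok p q z) then 1 else 0)"

lemma Mf_val:
  assumes "a \<in> PV" "b \<in> PV"
  shows "Mf p q [b, a] = (if a \<noteq> b \<and> ((a \<inter> b = {}) \<longleftrightarrow> (wl ! p \<inter> wl ! q = {})) then 1 else 0)"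
proof -
  have "a \<noteq> {}" using assms PV_ne by blast
  hence "a \<inter> b = {} \<Longrightarrow> a \<noteq> b" by auto
  thus ?thesis unfolding Mf_def Adj_def Nadj_def using assms by (auto simp: Int_commute)
qed

lemma gen_EP:
  assumes R: "gen X0 4 Rt"
  shows "(\<forall>(p, q)\<in>set P. p < length wl \<and> q < length wl) \<Longrightarrow> gen X0 (length wl) (EP P)"
proof (induction P)
  case Nil
  have "EP [] = onesT (length wl)" unfolding EP_def onesT_def by auto
  thus ?case using gen_onesT by simp
next
  case (Cons pq P)
  obtain p q where pq: "pq = (p, q)" by (cases pq)
  have pql: "p < length wl" "q < length wl" using Cons.prems pq by auto
  have g: "gen X0 (length wl) (EP P)" using Cons by auto
  have g2: "gen X0 (length wl) (\<lambda>y. EP P y * Mf p q [y ! q, y ! p])"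
    by (rule gen_mul[OF R g pql(1) pql(2) gen_Mf])
  have "(\<lambda>y. EP P y * Mf p q [y ! q, y ! p]) = EP (pq # P)"
  proof
    fix y :: "vert list"
    show "EP P y * Mf p q [y ! q, y ! p] = EP (pq # P) y"
    proof (cases "length y = length wl \<and> set y \<subseteq> PV")
      case True
      hence m: "y ! p \<in> PV" "y ! q \<in> PV" using pql by auto
      show ?thesis using True unfolding EP_def pq Mf_val[OF m] relok_def by auto
    next
      case False thus ?thesis unfolding EP_def by auto
    qed
  qed
  thus ?case using g2 by simp
qed

definition Pall :: "(nat \<times> nat) list" where
  "Pall = concat (map (\<lambda>q. map (\<lambda>p. (p, q)) [0..<q]) [0..<length wl])"

lemma set_Pall: "set Pall = {(p, q). p < q \<and> q < length wl}"
  unfolding Pall_def by auto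

lemma EP_Pall: "EP Pall = (\<lambda>z. if z \<in> W (length wl) \<and> good z then 1 else 0)"
  unfolding EP_def W_def good_def set_Pall by (auto simp: fun_eq_iff)

lemma gen_E:
  assumes R: "gen X0 4 Rt"
  shows "gen X0 (length wl) (\<lambda>z. if z \<in> W (length wl) \<and> good z then 1 else 0)"
  using gen_EP[OF R, of Pall] unfolding EP_Pall set_Pall by auto


definition SK :: "vert list \<Rightarrow> nat \<Rightarrow> tensor" where
  "SK x k = (\<lambda>zs. if length zs = length wl + k \<and> set zs \<subseteq> PV \<and> good (take (length wl) zs)
      \<and> (\<forall>i<k. zs ! (length wl + i) = zs ! idx (x ! i)) then 1 else 0)"

lemma gen_SK:
  assumes R: "gen X0 4 Rt" and x: "set x \<subseteq> PV"
  shows "k \<le> length x \<Longrightarrow> gen X0 (length wl + k) (SK x k)"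
proof (induction k)
  case 0
  have "SK x 0 = (\<lambda>z. if z \<in> W (length wl) \<and> good z then 1 else 0)"
    unfolding SK_def W_def by (auto simp: fun_eq_iff)
  thus ?case using gen_E[OF R] by simp
next
  case (Suc k)
  let ?L = "length wl"
  have k: "k < length x" using Suc.prems by simp
  have xk: "x ! k \<in> PV" using k x nth_mem by blast
  define j where "j = idx (x ! k)"
  have jL: "j < ?L" using idx[OF xk] unfolding j_def by simp
  have idxi: "idx (x ! i) < ?L" if "i < length x" for i using idx that x nth_mem by blast
  have g: "gen X0 (?L + k) (SK x k)" using Suc by simp
  have g2: "gen X0 (Suc (?L + k)) (ACt (?L + k) j (SK x k))" by (rule gen_AC[OF R g]) (use jL in simp)
  have "ACt (?L + k) j (SK x k) = SK x (Suc k)"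
  proof
    fix zs :: "vert list"
    show "ACt (?L + k) j (SK x k) zs = SK x (Suc k) zs"
    proof (cases "length zs = Suc (?L + k)")
      case True
      have tb: "take ?L (butlast zs) = take ?L zs" using True by (simp add: take_butlast)
      have lb: "length (butlast zs) = ?L + k" using True by simp
      have Q: "(\<forall>i<k. butlast zs ! (?L + i) = butlast zs ! idx (x ! i))
             \<longleftrightarrow> (\<forall>i<k. zs ! (?L + i) = zs ! idx (x ! i))"
      proof -
        have b1: "butlast zs ! (?L + i) = zs ! (?L + i)" if "i < k" for i
          using True that by (simp add: nth_butlast)
        have b2: "butlast zs ! idx (x ! i) = zs ! idx (x ! i)" if "i < k" for i
          using True that idxi[of i] k by (simp add: nth_butlast)
        show ?thesis using b1 b2 by simp
      qed
      have Q2: "(\<forall>i<Suc k. zs ! (?L + i) = zs ! idx (x ! i))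
             \<longleftrightarrow> (\<forall>i<k. zs ! (?L + i) = zs ! idx (x ! i)) \<and> zs ! (?L + k) = zs ! j"
        unfolding j_def by (auto simp: less_Suc_eq)
      have ne: "zs \<noteq> []" using True by auto
      have la: "last zs = zs ! (?L + k)" using last_conv_nth[OF ne] True by simp
      have sb: "set zs \<subseteq> PV \<Longrightarrow> set (butlast zs) \<subseteq> PV" by (meson in_set_butlastD subset_iff)
      show ?thesis unfolding ACt_def SK_def using True tb lb Q Q2 la sb by auto
    next
      case False thus ?thesis unfolding ACt_def SK_def by simp
    qed
  qed
  thus ?case using g2 by simp
qed

definition Fx :: "vert list \<Rightarrow> tensor" where
  "Fx x = (\<lambda>y. \<Sum>z\<in>W (length wl). SK x (length x) (z @ y))"

lemma gen_Fx:
  assumes R: "gen X0 4 Rt" and x: "set x \<subseteq> PV"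
  shows "gen X0 (length x) (Fx x)"
  unfolding Fx_def by (rule gen_sumW) (rule gen_SK[OF R x], simp)

lemma SK_val:
  assumes z: "z \<in> W (length wl)" and x: "set x \<subseteq> PV"
  shows "SK x (length x) (z @ y) = (if length y = length x \<and> set y \<subseteq> PV \<and> good z
     \<and> (\<forall>i<length x. y ! i = z ! idx (x ! i)) then 1 else 0)"
proof -
  have lz: "length z = length wl" "set z \<subseteq> PV" using z unfolding W_def by auto
  have idxi: "idx (x ! i) < length wl" if "i < length x" for i using idx that x nth_mem by blast
  have "(\<forall>i<length x. (z @ y) ! (length wl + i) = (z @ y) ! idx (x ! i))
      \<longleftrightarrow> (\<forall>i<length x. y ! i = z ! idx (x ! i))"
    using lz idxi by (auto simp: nth_append)
  thus ?thesis unfolding SK_def using lz by auto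
qed

lemma gen_sum:
  assumes "finite A" shows "(\<forall>a\<in>A. gen X n (f a)) \<Longrightarrow> gen X n (\<lambda>y. \<Sum>a\<in>A. c a * f a y)"
  using assms
proof (induction A rule: finite_induct)
  case empty thus ?case using gen_zero by simp
next
  case (insert a A)
  have "gen X n (\<lambda>y. c a * f a y)" using insert by (auto intro: gen_scale)
  moreover have "gen X n (\<lambda>y. \<Sum>a\<in>A. c a * f a y)" using insert by auto
  ultimately have "gen X n (\<lambda>y. c a * f a y + (\<Sum>a\<in>A. c a * f a y))" by (rule gen_add)
  thus ?case using insert by simp
qed

lemma relok_sym: "relok p q z = relok q p z"
  unfolding relok_def by (auto simp: Int_commute)

lemma good_rel: "good z \<Longrightarrow> p < length wl \<Longrightarrow> q < length wl \<Longrightarrow> p \<noteq> q \<Longrightarrow> relok p q z"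
  unfolding good_def by (metis linorder_neqE_nat relok_sym)

lemma good_aut:
  assumes z: "z \<in> W (length wl)" and g: "good z"
  shows "\<exists>\<pi>. \<pi> permutes {1..5::nat} \<and> (\<forall>A\<in>PV. z ! idx A = \<pi> ` A)"
proof (rule aut)
  have lz: "length z = length wl" "set z \<subseteq> PV" using z unfolding W_def by auto
  show im: "z ! idx A \<in> PV" if "A \<in> PV" for A
    using idx[OF that] lz nth_mem by (metis subsetD)
  have neq: "idx A \<noteq> idx B" if "A \<in> PV" "B \<in> PV" "A \<noteq> B" for A B
    using idx that by metis
  show "inj_on (\<lambda>A. z ! idx A) PV"
  proof (rule inj_onI, rule ccontr)
    fix A B assume A: "A \<in> PV" and B: "B \<in> PV" and e: "z ! idx A = z ! idx B" and ne: "A \<noteq> B"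
    have "relok (idx A) (idx B) z" using good_rel[OF g] idx A B neq[OF A B ne] by blast
    thus False using e unfolding relok_def by simp
  qed
  fix A B assume A: "A \<in> PV" and B: "B \<in> PV"
  show "(A \<inter> B = {}) \<longleftrightarrow> (z ! idx A \<inter> z ! idx B = {})"
  proof (cases "A = B")
    case True thus ?thesis using PV_ne A im[OF A] by simp
  next
    case False
    have "relok (idx A) (idx B) z" using good_rel[OF g] idx A B neq[OF A B False] by blast
    thus ?thesis unfolding relok_def using idx[OF A] idx[OF B] by simp
  qed
qed

lemma inv_img:
  assumes "\<pi> permutes {1..5::nat}"
  shows "inv \<pi> ` (\<pi> ` A) = A" "\<pi> ` (inv \<pi> ` A) = A"
  using assms by (simp_all add: image_comp comp_def permutes_inverses)

lemma key_sum:
  assumes T: "T \<in> PS5 n" and y: "y \<in> W n" and z: "z \<in> W (length wl)" and g: "good z"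
  shows "(\<Sum>x\<in>W n. T x * (if \<forall>i<n. y ! i = z ! idx (x ! i) then 1 else 0)) = T y"
proof -
  obtain \<pi> where p: "\<pi> permutes {1..5::nat}" and ph: "\<forall>A\<in>PV. z ! idx A = \<pi> ` A"
    using good_aut[OF z g] by blast
  have ly: "length y = n" "set y \<subseteq> PV" using y unfolding W_def by auto
  define x0 where "x0 = map (\<lambda>v. inv \<pi> ` v) y"
  have x0W: "x0 \<in> W n" unfolding x0_def W_def using ly img_PV_iff[OF p] by auto
  have c: "(\<forall>i<n. y ! i = z ! idx (x ! i)) \<longleftrightarrow> x = x0" if x: "x \<in> W n" for x
  proof -
    have lx: "length x = n" "set x \<subseteq> PV" using x unfolding W_def by auto
    have "(\<forall>i<n. y ! i = z ! idx (x ! i)) \<longleftrightarrow> (\<forall>i<n. y ! i = \<pi> ` (x ! i))"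
      using ph lx nth_mem by (metis subsetD)
    also have "\<dots> \<longleftrightarrow> (\<forall>i<n. x ! i = inv \<pi> ` (y ! i))"
      using inv_img[OF p] by metis
    also have "\<dots> \<longleftrightarrow> x = x0" unfolding x0_def using lx ly by (auto simp: list_eq_iff_nth_eq)
    finally show ?thesis .
  qed
  have "(\<Sum>x\<in>W n. T x * (if \<forall>i<n. y ! i = z ! idx (x ! i) then 1 else 0))
      = (\<Sum>x\<in>W n. if x = x0 then T x else 0)"
    by (rule sum.cong) (auto simp: c)
  also have "\<dots> = T x0" using x0W W_fin by simp
  also have "\<dots> = act \<pi> T y" unfolding act_def x0_def ..
  also have "\<dots> = T y" using T p unfolding PS5_def by auto
  finally show ?thesis .
qed

definition Kc :: complex where "Kc = of_nat (card {z \<in> W (length wl). good z})"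

lemma Kc_nz: "Kc \<noteq> 0"
proof -
  have "wl \<in> W (length wl)" unfolding W_def using wl by simp
  moreover have "good wl" unfolding good_def relok_def using wl(1) nth_eq_iff_index_eq by fastforce
  ultimately have "{z \<in> W (length wl). good z} \<noteq> {}" by blast
  moreover have "finite {z \<in> W (length wl). good z}" using W_fin by simp
  ultimately show ?thesis unfolding Kc_def by simp
qed

lemma decomp:
  assumes T: "T \<in> PS5 n"
  shows "T = (\<lambda>y. \<Sum>x\<in>W n. (T x / Kc) * Fx x y)"
proof
  fix y :: "vert list"
  have TP: "T \<in> Pn n" using T unfolding PS5_def by simp
  show "T y = (\<Sum>x\<in>W n. (T x / Kc) * Fx x y)"
  proof (cases "y \<in> W n")
    case False
    have "T y = 0" using TP False unfolding Pn_def W_def by auto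
    moreover have "Fx x y = 0" if "x \<in> W n" for x
    proof -
      have lx: "length x = n" "set x \<subseteq> PV" using that unfolding W_def by auto
      have "SK x (length x) (z @ y) = 0" if "z \<in> W (length wl)" for z
        using SK_val[OF that lx(2)] False lx unfolding W_def by auto
      thus ?thesis unfolding Fx_def by simp
    qed
    ultimately show ?thesis by simp
  next
    case True
    have ly: "length y = n" "set y \<subseteq> PV" using True unfolding W_def by auto
    have F: "Fx x y = (\<Sum>z\<in>W (length wl). if good z \<and> (\<forall>i<n. y ! i = z ! idx (x ! i)) then 1 else 0)"
      if "x \<in> W n" for x
    proof -
      have lx: "length x = n" "set x \<subseteq> PV" using that unfolding W_def by auto
      show ?thesis unfolding Fx_def using SK_val[OF _ lx(2)] lx ly by (intro sum.cong refl) auto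
    qed
    have "(\<Sum>x\<in>W n. (T x / Kc) * Fx x y)
        = (1 / Kc) * (\<Sum>x\<in>W n. \<Sum>z\<in>W (length wl). T x * (if good z \<and> (\<forall>i<n. y ! i = z ! idx (x ! i)) then 1 else 0))"
      by (simp add: F sum_distrib_left sum_divide_distrib)
    also have "(\<Sum>x\<in>W n. \<Sum>z\<in>W (length wl). T x * (if good z \<and> (\<forall>i<n. y ! i = z ! idx (x ! i)) then 1 else 0))
        = (\<Sum>z\<in>W (length wl). \<Sum>x\<in>W n. T x * (if good z \<and> (\<forall>i<n. y ! i = z ! idx (x ! i)) then 1 else 0))"
      by (rule sum.swap)
    also have "\<dots> = (\<Sum>z\<in>W (length wl). if good z then T y else 0)"
    proof (rule sum.cong[OF refl])
      fix z assume z: "z \<in> W (length wl)"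
      show "(\<Sum>x\<in>W n. T x * (if good z \<and> (\<forall>i<n. y ! i = z ! idx (x ! i)) then 1 else 0))
          = (if good z then T y else 0)"
      proof (cases "good z")
        case True thus ?thesis using key_sum[OF T \<open>y \<in> W n\<close> z True] by simp
      next
        case False thus ?thesis by simp
      qed
    qed
    also have "\<dots> = Kc * T y"
      unfolding Kc_def using W_fin by (simp add: sum.If_cases Int_def)
    finally show ?thesis using Kc_nz by simp
  qed
qed

theorem theorem5p3:
  shows "(\<forall>n. Qfam n = PS5 n) \<longleftrightarrow> Rt \<in> Qfam 4"
proof
  assume "\<forall>n. Qfam n = PS5 n"
  thus "Rt \<in> Qfam 4" using Rt_PS5 by simp
next
  assume "Rt \<in> Qfam 4"
  hence R: "gen X0 4 Rt" by (simp add: Qfam_gen)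
  show "\<forall>n. Qfam n = PS5 n"
  proof
    fix n
    show "Qfam n = PS5 n"
    proof
      show "Qfam n \<subseteq> PS5 n" by (rule Qfam_sub)
      show "PS5 n \<subseteq> Qfam n"
      proof
        fix T assume T: "T \<in> PS5 n"
        have "\<forall>x\<in>W n. gen X0 n (Fx x)"
        proof
          fix x assume "x \<in> W n"
          hence "length x = n" "set x \<subseteq> PV" unfolding W_def by auto
          thus "gen X0 n (Fx x)" using gen_Fx[OF R] by metis
        qed
        hence "gen X0 n (\<lambda>y. \<Sum>x\<in>W n. (T x / Kc) * Fx x y)" by (rule gen_sum[OF W_fin])
        hence "gen X0 n T" using decomp[OF T] by simp
        thus "T \<in> Qfam n" by (simp add: Qfam_gen)
      qed
    qed
  qed
qed


end
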